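(* Let $A_5$ be the Cayley-Dickson algebra of 32-nions with canonical basis $e_0,\dots,e_{31}$. Then: (i) the 31 imaginary units split into ten units each lying on exactly nine defective triples (namely $e_a$, $a\in\{7,11,13,14,19,21,22,25,26,28\}$), fifteen units each lying on exactly seven defective triples (namely $e_a$, $a\in\{3,5,6,9,10,12,15,17,18,20,23,24,27,29,30\}$), and six units lying on no defective triple (namely $e_1,e_2,e_4,e_8,e_{16},e_{31}$); (ii) the incidence structure $\mathcal{C}_5$ whose points are the fifteen units of the second kind and whose lines are the defective triples consisting solely of such units is a $(15_4,20_3)$-configuration isomorphic to the combinatorial Grassmannian $G_2(6)$; (iii) there is a bijection $\varphi$ from the set of geometric hyperplanes of $\mathcal{C}_5$ onto $\{e_1,\dots,e_{31}\}$ mapping the set of lines of the Veldkamp space $\mathcal{V}(\mathcal{C}_5)$ bijectively onto the set of distinguished triples of $A_5$ (so $\mathcal{V}(\mathcal{C}_5)\cong\mathrm{PG}(4,2)$), such that the geometric hyperplanes with $6$ points (two disjoint lines), $7$ points (a point together with all points not collinear with it) and $10$ points (a copy of the Desargues configuration $G_2(5)$) are mapped onto the units of the first, second and third kind in (i), respectively.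
   Context: Cayley-Dickson algebras: $A_0=\mathbb{R}$ with trivial conjugation; $A_{N+1}$ is the set of ordered pairs $(x,y)$ with $x,y\in A_N$, with conjugation $(x,y)^*=(x^*,-y)$ and multiplication $(x,y)(X,Y)=(xX-Yy^*,\,x^*Y+Xy)$. The canonical basis of $A_0$ is $e_0=1$; if $e_0,\dots,e_{2^N-1}$ is the canonical basis of $A_N$, the canonical basis of $A_{N+1}$ is $e_a=(e_a,0)$ and $e_{2^N+a}=(0,e_a)$ for $0\le a\le 2^N-1$. The imaginary units of $A_N$ are $e_1,\dots,e_{2^N-1}$. A distinguished triple is a set $\{e_a,e_b,e_c\}$ with $1\le a<b<c\le 2^N-1$ and $e_ae_b=\pm e_c$; it is called ordinary if $a+b=c$ and defective if $a+b\neq c$. A $(v_r,b_k)$-configuration is a point-line incidence structure with $v$ points and $b$ lines, each line having $k$ points, each point on $r$ lines, two distinct points on at most one common line. The combinatorial Grassmannian $G_2(n)$ is the point-line incidence structure whose points are the $2$-element subsets of $\{1,\dots,n\}$, whose lines are the $3$-element subsets, incidence being inclusion ($G_2(5)$ is the Desargues configuration). A geometric hyperplane of a point-line incidence structure is a proper subset $H$ of the point set such that every line is either contained in $H$ or meets $H$ in exactly one point. The Veldkamp space $\mathcal{V}(\mathcal{C})$ has as points the geometric hyperplanes of $\mathcal{C}$; for distinct hyperplanes $H',H''$ the Veldkamp line $H'H''$ is the set of all geometric hyperplanes $H$ with $H=H'$, $H=H''$, or $H'\cap H''=H'\cap H=H''\cap H$. *)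

theory Defs
  imports Complex_Main
begin

text \<open>An element of A_N is represented by its coordinate function with respect to
the canonical basis e_0,...,e_(2^N-1): a function nat => real, whose values at
indices >= 2^N are irrelevant (all operations below produce 0 there).
The pair (x,y) of A_(N+1) corresponds to the coordinate function whose first
2^N coordinates are those of x and whose next 2^N coordinates are those of y;
this is exactly the canonical basis convention e_a = (e_a,0), e_(2^N+a) = (0,e_a).\<close>

type_synonym cd = "nat \<Rightarrow> real"

definition cd_pair :: "nat \<Rightarrow> cd \<Rightarrow> cd \<Rightarrow> cd" where
  "cd_pair N x y = (\<lambda>i. if i < 2^N then x i else if i < 2^(Suc N) then y (i - 2^N) else 0)"

definition cd_fst :: "nat \<Rightarrow> cd \<Rightarrow> cd" where
  "cd_fst N z = (\<lambda>i. if i < 2^N then z i else 0)"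

definition cd_snd :: "nat \<Rightarrow> cd \<Rightarrow> cd" where
  "cd_snd N z = (\<lambda>i. if i < 2^N then z (2^N + i) else 0)"

fun cd_conj :: "nat \<Rightarrow> cd \<Rightarrow> cd" where
  "cd_conj 0 z = (\<lambda>i. if i = 0 then z 0 else 0)"
| "cd_conj (Suc N) z =
     cd_pair N (cd_conj N (cd_fst N z)) (\<lambda>i. - cd_snd N z i)"

fun cd_mult :: "nat \<Rightarrow> cd \<Rightarrow> cd \<Rightarrow> cd" where
  "cd_mult 0 z w = (\<lambda>i. if i = 0 then z 0 * w 0 else 0)"
| "cd_mult (Suc N) z w =
     (let x = cd_fst N z; y = cd_snd N z; X = cd_fst N w; Y = cd_snd N w in
      cd_pair N (\<lambda>i. cd_mult N x X i - cd_mult N Y (cd_conj N y) i)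
                (\<lambda>i. cd_mult N (cd_conj N x) Y i + cd_mult N X y i))"

definition cd_unit :: "nat \<Rightarrow> cd" where
  "cd_unit a = (\<lambda>i. if i = a then 1 else 0)"

text \<open>Distinguished triples of A_N, each recorded by its set of indices {a,b,c}
(the unit e_a is identified with its index a).\<close>
definition distinguished_triples :: "nat \<Rightarrow> nat set set" where
  "distinguished_triples N =
     {{a, b, c} | a b c. 1 \<le> a \<and> a < b \<and> b < c \<and> c \<le> 2^N - 1 \<and>
        (cd_mult N (cd_unit a) (cd_unit b) = cd_unit c \<or>
         cd_mult N (cd_unit a) (cd_unit b) = (\<lambda>i. - cd_unit c i))}"

definition defective_triples :: "nat \<Rightarrow> nat set set" where
  "defective_triples N =
     {{a, b, c} | a b c. 1 \<le> a \<and> a < b \<and> b < c \<and> c \<le> 2^N - 1 \<and>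
        (cd_mult N (cd_unit a) (cd_unit b) = cd_unit c \<or>
         cd_mult N (cd_unit a) (cd_unit b) = (\<lambda>i. - cd_unit c i)) \<and> a + b \<noteq> c}"

definition is_configuration ::
  "'a set \<Rightarrow> 'a set set \<Rightarrow> nat \<Rightarrow> nat \<Rightarrow> nat \<Rightarrow> nat \<Rightarrow> bool" where
  "is_configuration P L v r b k \<longleftrightarrow>
     finite P \<and> card P = v \<and> finite L \<and> card L = b \<and>
     (\<forall>l\<in>L. l \<subseteq> P \<and> card l = k) \<and>
     (\<forall>p\<in>P. card {l\<in>L. p \<in> l} = r) \<and>
     (\<forall>p\<in>P. \<forall>q\<in>P. p \<noteq> q \<longrightarrow> card {l\<in>L. p \<in> l \<and> q \<in> l} \<le> 1)"

definition incidence_iso ::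
  "'a set \<Rightarrow> 'b set \<Rightarrow> ('a \<Rightarrow> 'b \<Rightarrow> bool) \<Rightarrow>
   'c set \<Rightarrow> 'd set \<Rightarrow> ('c \<Rightarrow> 'd \<Rightarrow> bool) \<Rightarrow> bool" where
  "incidence_iso P1 L1 I1 P2 L2 I2 \<longleftrightarrow>
     (\<exists>f g. bij_betw f P1 P2 \<and> bij_betw g L1 L2 \<and>
        (\<forall>p\<in>P1. \<forall>l\<in>L1. I1 p l \<longleftrightarrow> I2 (f p) (g l)))"

definition G2_points :: "nat \<Rightarrow> nat set set" where
  "G2_points n = {S. S \<subseteq> {1..n} \<and> card S = 2}"

definition G2_lines :: "nat \<Rightarrow> nat set set" where
  "G2_lines n = {S. S \<subseteq> {1..n} \<and> card S = 3}"

definition geom_hyperplanes :: "'a set \<Rightarrow> 'a set set \<Rightarrow> 'a set set" where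
  "geom_hyperplanes P L =
     {H. H \<subset> P \<and> (\<forall>l\<in>L. l \<subseteq> H \<or> card (l \<inter> H) = 1)}"

definition veldkamp_line :: "'a set \<Rightarrow> 'a set set \<Rightarrow> 'a set \<Rightarrow> 'a set \<Rightarrow> 'a set set" where
  "veldkamp_line P L H1 H2 =
     {H \<in> geom_hyperplanes P L. H = H1 \<or> H = H2 \<or>
        (H1 \<inter> H2 = H1 \<inter> H \<and> H1 \<inter> H2 = H2 \<inter> H)}"

definition veldkamp_lines :: "'a set \<Rightarrow> 'a set set \<Rightarrow> 'a set set set" where
  "veldkamp_lines P L =
     {veldkamp_line P L H1 H2 | H1 H2.
        H1 \<in> geom_hyperplanes P L \<and> H2 \<in> geom_hyperplanes P L \<and> H1 \<noteq> H2}"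

end

theory Submission
  imports Defs
begin



definition su :: "real \<Rightarrow> nat \<Rightarrow> cd" where
  "su s a = (\<lambda>i. if i = a then s else 0)"

fun csg :: "nat \<Rightarrow> nat \<Rightarrow> real" where
  "csg 0 a = 1"
| "csg (Suc N) a = (if a < 2^N then csg N a else -1)"

fun msg :: "nat \<Rightarrow> nat \<Rightarrow> nat \<Rightarrow> real" where
  "msg 0 a b = 1"
| "msg (Suc N) a b = (if a < 2^N then (if b < 2^N then msg N a b else csg N a * msg N a (b - 2^N))
     else (if b < 2^N then msg N b (a - 2^N) else - (msg N (b - 2^N) (a - 2^N) * csg N (a - 2^N))))"

lemma bit_low: "(a::nat) < 2^N \<Longrightarrow> N \<le> n \<Longrightarrow> \<not> bit a n"
proof -
  assume a: "a < 2^N" "N \<le> n"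
  have "(2::nat)^N \<le> 2^n" using a(2) by simp
  then have "a div 2^n = 0" using a(1) by (metis div_less less_le_trans)
  then show ?thesis by (simp add: bit_nat_def)
qed

lemma bit_plus: "(a::nat) < 2^N \<Longrightarrow> bit (2^N + a) n \<longleftrightarrow> (n = N \<or> bit a n)"
proof -
  assume a: "a < 2^N"
  have "(2::nat)^N + a = or (2^N) a"
    by (rule disjunctive_add) (use a bit_low in \<open>auto simp: bit_exp_iff\<close>)
  then show ?thesis by (auto simp: bit_or_iff bit_exp_iff)
qed

lemma xor_lt: "(a::nat) < 2^N \<Longrightarrow> b < 2^N \<Longrightarrow> xor a b < 2^N"
  by (metis take_bit_nat_eq_self_iff take_bit_xor)

lemma xor_hi1: "(a::nat) < 2^N \<Longrightarrow> b < 2^N \<Longrightarrow> xor (2^N + a) b = 2^N + xor a b"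
  by (rule bit_eqI) (auto simp: bit_plus bit_xor_iff xor_lt dest: bit_low[of b N])

lemma xor_hi2: "(a::nat) < 2^N \<Longrightarrow> b < 2^N \<Longrightarrow> xor a (2^N + b) = 2^N + xor a b"
  by (rule bit_eqI) (auto simp: bit_plus bit_xor_iff xor_lt dest: bit_low[of a N])

lemma xor_hi3: "(a::nat) < 2^N \<Longrightarrow> b < 2^N \<Longrightarrow> xor (2^N + a) (2^N + b) = xor a b"
  by (rule bit_eqI) (auto simp: bit_plus bit_xor_iff dest: bit_low[of b N] bit_low[of a N])

lemma csg_pm: "csg N a = 1 \<or> csg N a = -1"
  by (induction N) auto

lemma msg_pm: "msg N a b = 1 \<or> msg N a b = -1"
proof (induction N arbitrary: a b)
  case 0 then show ?case by simp
next
  case (Suc N)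
  have c: "\<And>x y. (x = (1::real) \<or> x = -1) \<Longrightarrow> (y = 1 \<or> y = -1) \<Longrightarrow> (x*y = 1 \<or> x*y = -1) \<and> (-(x*y) = 1 \<or> -(x*y) = -1)"
    by auto
  show ?case using Suc c csg_pm by (auto simp del: mult_minus_left)
qed

lemma fst_lo: "a < 2^N \<Longrightarrow> cd_fst N (su s a) = su s a"
  by (auto simp: cd_fst_def su_def)
lemma fst_hi: "2^N \<le> a \<Longrightarrow> cd_fst N (su s a) = su 0 0"
  by (auto simp: cd_fst_def su_def)
lemma snd_lo: "a < 2^N \<Longrightarrow> cd_snd N (su s a) = su 0 0"
  by (auto simp: cd_snd_def su_def)
lemma snd_hi: "2^N \<le> a \<Longrightarrow> a < 2^Suc N \<Longrightarrow> cd_snd N (su s a) = su s (a - 2^N)"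
  by (auto simp: cd_snd_def su_def fun_eq_iff)

lemma conj_su: "a < 2^N \<Longrightarrow> cd_conj N (su s a) = su (s * csg N a) a"
proof (induction N arbitrary: s a)
  case 0 then show ?case by (auto simp: su_def)
next
  case (Suc N)
  show ?case
  proof (cases "a < 2^N")
    case True
    then show ?thesis using Suc
      by (simp add: fst_lo snd_lo) (auto simp: cd_pair_def su_def fun_eq_iff)
  next
    case False
    have z: "cd_conj N (su 0 0) = su 0 0" using Suc.IH[of 0 0] by simp
    show ?thesis using False Suc.prems
      by (simp add: fst_hi snd_hi z) (auto simp: cd_pair_def su_def fun_eq_iff)
  qed
qed

lemma mult_su: "a < 2^N \<Longrightarrow> b < 2^N \<Longrightarrow>
   cd_mult N (su s a) (su t b) = su (s * t * msg N a b) (xor a b)"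
proof (induction N arbitrary: s t a b)
  case 0 then show ?case by (auto simp: su_def)
next
  case (Suc N)
  have z1: "\<And>w. w < 2^N \<Longrightarrow> cd_mult N (su 0 0) (su t w) = su 0 0"
    using Suc.IH[of 0 _ 0] by (simp add: su_def)
  have z2: "\<And>w. w < 2^N \<Longrightarrow> cd_mult N (su t w) (su 0 0) = su 0 0"
    using Suc.IH[of _ 0 _ 0] by (simp add: su_def)
  have c0: "cd_conj N (su 0 0) = su 0 0" using conj_su[of 0 N 0] by simp
  show ?case
  proof (cases "a < 2^N"; cases "b < 2^N")
    assume a: "a < 2^N" and b: "b < 2^N"
    show ?thesis using a b
      by (simp add: Let_def fst_lo snd_lo Suc.IH conj_su z1 z2 c0)
         (auto simp: cd_pair_def su_def fun_eq_iff xor_lt)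
  next
    assume a: "a < 2^N" and b: "\<not> b < 2^N"
    define b' where "b' = b - 2^N"
    have b': "b' < 2^N" "b = 2^N + b'" using b Suc.prems by (auto simp: b'_def)
    show ?thesis using a b b'
      by (simp add: Let_def fst_lo snd_lo fst_hi snd_hi Suc.IH conj_su z1 z2 c0 xor_hi2)
         (auto simp: cd_pair_def su_def fun_eq_iff xor_lt)
  next
    assume a: "\<not> a < 2^N" and b: "b < 2^N"
    define a' where "a' = a - 2^N"
    have a': "a' < 2^N" "a = 2^N + a'" using a Suc.prems by (auto simp: a'_def)
    show ?thesis using a b a'
      by (simp add: Let_def fst_lo snd_lo fst_hi snd_hi Suc.IH conj_su z1 z2 c0 xor_hi1)
         (auto simp: cd_pair_def su_def fun_eq_iff xor_lt xor.commute)
  next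
    assume a: "\<not> a < 2^N" and b: "\<not> b < 2^N"
    define a' where "a' = a - 2^N"
    have a': "a' < 2^N" "a = 2^N + a'" using a Suc.prems by (auto simp: a'_def)
    define b' where "b' = b - 2^N"
    have b': "b' < 2^N" "b = 2^N + b'" using b Suc.prems by (auto simp: b'_def)
    show ?thesis using a b a' b'
      by (simp add: Let_def fst_lo snd_lo fst_hi snd_hi Suc.IH conj_su z1 z2 c0 xor_hi3)
         (auto simp: cd_pair_def su_def fun_eq_iff xor_lt xor.commute)
  qed
qed




lemmas ss = set_eq_subset insert_subset

definition K2l :: "nat list" where "K2l = [3,5,6,9,10,12,15,17,18,20,23,24,27,29,30]"

definition pp :: "nat \<Rightarrow> nat \<times> nat" where
 "pp a = (if a = 3 then (0,1) else if a = 5 then (0,2) else if a = 6 then (1,2) else if a = 9 then (0,3) else if a = 10 then (1,3) else if a = 12 then (2,3) else if a = 15 then (4,5) else if a = 17 then (0,4) else if a = 18 then (1,4) else if a = 20 then (2,4) else if a = 23 then (3,5) else if a = 24 then (3,4) else if a = 27 then (2,5) else if a = 29 then (1,5) else if a = 30 then (0,5) else (0,0))"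

definition pt :: "nat \<Rightarrow> nat \<Rightarrow> nat" where
 "pt i j = (if (i,j) = (0,1) then 3 else if (i,j) = (0,2) then 5 else if (i,j) = (0,3) then 9 else if (i,j) = (0,4) then 17 else if (i,j) = (0,5) then 30 else if (i,j) = (1,2) then 6 else if (i,j) = (1,3) then 10 else if (i,j) = (1,4) then 18 else if (i,j) = (1,5) then 29 else if (i,j) = (2,3) then 12 else if (i,j) = (2,4) then 20 else if (i,j) = (2,5) then 27 else if (i,j) = (3,4) then 24 else if (i,j) = (3,5) then 23 else if (i,j) = (4,5) then 15 else 0)"

definition LTl :: "(nat \<times> nat \<times> nat) list" where
 "LTl = [(3,5,6), (3,9,10), (3,17,18), (3,29,30), (5,9,12), (5,17,20), (5,27,30), (6,10,12), (6,18,20), (6,27,29), (9,17,24), (9,23,30), (10,18,24), (10,23,29), (12,20,24), (12,23,27), (15,17,30), (15,18,29), (15,20,27), (15,23,24)]"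

definition tri3 :: "nat \<times> nat \<times> nat \<Rightarrow> nat set" where
  "tri3 t = (case t of (a,b,c) \<Rightarrow> {a,b,c})"

definition mem :: "nat \<Rightarrow> nat \<Rightarrow> bool" where
  "mem c a \<longleftrightarrow> bit c (fst (pp a)) = bit c (snd (pp a))"

definition Hc :: "nat \<Rightarrow> nat set" where
  "Hc c = set (filter (mem c) K2l)"

lemma all_upt: "(\<forall>a<n. P a) \<longleftrightarrow> list_all P [0..<n]"
  by (auto simp: list_all_iff)

lemma upt6: "[0..<6] = [0,1,2,3,4,5::nat]" by code_simp

lemma pt_ok: "i < j \<Longrightarrow> j \<le> 5 \<Longrightarrow> pt i j \<in> set K2l \<and> pp (pt i j) = (i,j)"
proof -
  have "\<forall>j<6. \<forall>i<6. i < j \<longrightarrow> pt i j \<in> set K2l \<and> pp (pt i j) = (i,j)"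
    unfolding all_upt upt6 by (simp add: pt_def pp_def K2l_def)
  moreover assume "i < j" "j \<le> 5"
  ultimately show ?thesis by simp
qed

lemma pp_ok_all: "\<forall>a\<in>set K2l. fst (pp a) < snd (pp a) \<and> snd (pp a) \<le> 5 \<and> pt (fst (pp a)) (snd (pp a)) = a"
  by (simp add: K2l_def pp_def pt_def)

lemma pp_ok: "a \<in> set K2l \<Longrightarrow> fst (pp a) < snd (pp a) \<and> snd (pp a) \<le> 5 \<and> pt (fst (pp a)) (snd (pp a)) = a"
  using pp_ok_all by blast

lemma tri3_inj: "inj_on tri3 {(a,b,c). a<b \<and> b<c}"
proof (rule inj_onI)
  fix s t assume st: "s \<in> {(a,b,c). a<b \<and> b<c}" "t \<in> {(a,b,c). a<b \<and> b<c}" "tri3 s = tri3 t"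
  obtain a b c where s: "s = (a,b,c)" by (cases s) auto
  obtain a' b' c' where t: "t = (a',b',c')" by (cases t) auto
  have h: "a<b" "b<c" "a'<b'" "b'<c'" using st s t by auto
  have e: "{a,b,c} = {a',b',c'}" using st s t by (simp add: tri3_def)
  have "a \<in> {a',b',c'}" "b \<in> {a',b',c'}" "c \<in> {a',b',c'}"
       "a' \<in> {a,b,c}" "b' \<in> {a,b,c}" "c' \<in> {a,b,c}" using e by blast+
  then show "s = t" using h s t by auto
qed

lemma distinct_LTl: "distinct LTl" by (simp add: LTl_def)
lemma sorted_LTl: "set LTl \<subseteq> {(a,b,c). a<b \<and> b<c}" by (auto simp: LTl_def)

lemma card_tri3:
  assumes "distinct xs" "set xs \<subseteq> {(a,b,c). a<b \<and> b<c}"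
  shows "card {T \<in> tri3 ` set xs. P T} = length (filter (\<lambda>t. P (tri3 t)) xs)"
proof -
  have "{T \<in> tri3 ` set xs. P T} = tri3 ` set (filter (\<lambda>t. P (tri3 t)) xs)" by auto
  moreover have "inj_on tri3 (set (filter (\<lambda>t. P (tri3 t)) xs))"
    by (rule inj_on_subset[OF tri3_inj]) (use assms(2) in auto)
  ultimately have "card {T \<in> tri3 ` set xs. P T} = card (set (filter (\<lambda>t. P (tri3 t)) xs))"
    by (simp only: card_image)
  also have "\<dots> = length (filter (\<lambda>t. P (tri3 t)) xs)"
    by (rule distinct_card) (simp add: assms(1))
  finally show ?thesis .
qed

lemma card_tri3': 
  assumes "distinct xs" "set xs \<subseteq> {(a,b,c). a<b \<and> b<c}"
  shows "card (tri3 ` set xs) = length xs"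
  using card_tri3[OF assms, of "\<lambda>_. True"] by simp

lemma mem_xor: "mem (xor c d) a \<longleftrightarrow> (mem c a \<longleftrightarrow> mem d a)"
  by (auto simp: mem_def bit_xor_iff)

lemma bit5: "(c::nat) < 32 \<Longrightarrow> 5 \<le> k \<Longrightarrow> \<not> bit c k"
  using bit_low[of c 5 k] by simp

lemma nz_bit: "(c::nat) \<noteq> 0 \<Longrightarrow> \<exists>k. bit c k"
proof (rule ccontr)
  assume "c \<noteq> 0" "\<not> (\<exists>k. bit c k)"
  then have "c = 0" by (intro bit_eqI) auto
  with \<open>c \<noteq> 0\<close> show False by simp
qed

lemma nz_bit5: "(c::nat) \<noteq> 0 \<Longrightarrow> c < 32 \<Longrightarrow> \<exists>k<5. bit c k"
  using nz_bit bit5 by (meson not_le)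

lemma par3: "x \<noteq> y \<Longrightarrow> y \<noteq> z \<Longrightarrow> x \<noteq> z \<Longrightarrow>
  ({x,y,z} \<subseteq> H \<or> card ({x,y,z} \<inter> H) = 1) \<longleftrightarrow> (x\<in>H \<longleftrightarrow> (y\<in>H \<longleftrightarrow> z\<in>H))"
  by (cases "x \<in> H"; cases "y \<in> H"; cases "z \<in> H") auto

lemma line_par: "\<forall>t\<in>set LTl. \<forall>c. case t of (x,y,z) \<Rightarrow> (mem c x \<longleftrightarrow> (mem c y \<longleftrightarrow> mem c z))"
  by (auto simp: LTl_def mem_def pp_def)

lemma Hc_sub: "Hc c \<subseteq> set K2l" by (auto simp: Hc_def)
lemma Hc_mem: "a \<in> Hc c \<longleftrightarrow> a \<in> set K2l \<and> mem c a" by (auto simp: Hc_def)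

lemma Csub:
  assumes c: "c \<in> {1..31}" and x: "x \<in> {1..31}" and sub: "Hc c \<subseteq> Hc x"
  shows "x = c"
proof -
  have key: "bit c i = bit c j \<Longrightarrow> bit x i = bit x j" if "i < j" "j \<le> 5" for i j
  proof -
    assume "bit c i = bit c j"
    then have "pt i j \<in> Hc c" using pt_ok[OF that] by (simp add: Hc_mem mem_def)
    then have "pt i j \<in> Hc x" using sub by blast
    then show ?thesis using pt_ok[OF that] by (simp add: Hc_mem mem_def)
  qed
  have key': "bit c i = bit c j \<Longrightarrow> bit x i = bit x j" if "i \<le> 5" "j \<le> 5" for i j
    using key[of i j] key[of j i] that by (metis linorder_neqE_nat)
  have c5: "\<not> bit c 5" "\<not> bit x 5" using c x bit5 by auto
  have A: "bit x i \<Longrightarrow> bit c i" if "i < 5" for i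
    using key'[of i 5] c5 that by auto
  obtain k where k: "k < 5" "bit x k" using nz_bit5[of x] x by auto
  have B: "bit c i \<Longrightarrow> bit x i" if "i < 5" for i
    using key'[of i k] k A[of k] that by auto
  show "x = c"
  proof (rule bit_eqI)
    fix n show "bit x n = bit c n"
      using A[of n] B[of n] bit5[of x n] bit5[of c n] c x by (cases "n < 5") auto
  qed
qed

lemma Hc_inj: "inj_on Hc {1..31}"
  by (rule inj_onI) (metis Csub order_refl)




definition DTl :: "(nat \<times> nat \<times> nat) list" where "DTl = [(3,5,6), (3,9,10), (3,13,14), (3,17,18), (3,21,22), (3,25,26), (3,29,30), (5,9,12), (5,11,14), (5,17,20), (5,19,22), (5,25,28), (5,27,30), (6,10,12), (6,11,13), (6,18,20), (6,19,21), (6,26,28), (6,27,29), (7,9,14), (7,10,13), (7,11,12), (7,17,22), (7,18,21), (7,19,20), (7,25,30), (7,26,29), (7,27,28), (9,17,24), (9,19,26), (9,21,28), (9,23,30), (10,18,24), (10,19,25), (10,22,28), (10,23,29), (11,17,26), (11,18,25), (11,19,24), (11,21,30), (11,22,29), (11,23,28), (12,20,24), (12,21,25), (12,22,26), (12,23,27), (13,17,28), (13,19,30), (13,20,25), (13,21,24), (13,22,27), (13,23,26), (14,18,28), (14,19,29), (14,20,26), (14,21,27), (14,22,24), (14,23,25), (15,17,30), (15,18,29), (15,19,28), (15,20,27), (15,21,26), (15,22,25), (15,23,24)]"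

lemma unit_su: "cd_unit a = su 1 a" by (simp add: cd_unit_def su_def fun_eq_iff)
lemma neg_su: "(\<lambda>i. - su s a i) = su (-s) a" by (auto simp: su_def)
lemma su_eq: "s \<noteq> 0 \<Longrightarrow> su s x = su t c \<longleftrightarrow> (x = c \<and> s = t)"
proof
  assume s: "s \<noteq> 0" and e: "su s x = su t c"
  have "su s x x = su t c x" using e by simp
  then show "x = c \<and> s = t" using s by (auto simp: su_def split: if_splits)
qed auto

lemma trip_iff: "a < 32 \<Longrightarrow> b < 32 \<Longrightarrow>
  (cd_mult 5 (cd_unit a) (cd_unit b) = cd_unit c \<or> cd_mult 5 (cd_unit a) (cd_unit b) = (\<lambda>i. - cd_unit c i))
   \<longleftrightarrow> c = xor a b"
  using mult_su[of a 5 b 1 1] msg_pm[of 5 a b]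
  by (auto simp: unit_su neg_su su_eq)

lemma trip_eq: "(1 \<le> a \<and> a < b \<and> b < c \<and> c \<le> (2::nat)^5 - 1 \<and>
   (cd_mult 5 (cd_unit a) (cd_unit b) = cd_unit c \<or> cd_mult 5 (cd_unit a) (cd_unit b) = (\<lambda>i. - cd_unit c i)))
  \<longleftrightarrow> (1 \<le> a \<and> a < b \<and> b < c \<and> c \<le> 31 \<and> c = xor a b)"
  using trip_iff[of a b c] by auto

lemma trip_eq2: "(1 \<le> a \<and> a < b \<and> b < c \<and> c \<le> (2::nat)^5 - 1 \<and>
   (cd_mult 5 (cd_unit a) (cd_unit b) = cd_unit c \<or> cd_mult 5 (cd_unit a) (cd_unit b) = (\<lambda>i. - cd_unit c i)) \<and> a + b \<noteq> c)
  \<longleftrightarrow> (1 \<le> a \<and> a < b \<and> b < c \<and> c \<le> 31 \<and> c = xor a b \<and> a + b \<noteq> c)"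
  using trip_iff[of a b c] by auto

lemma dist5: "distinguished_triples 5 = {{a,b,c} | a b c. 1 \<le> a \<and> a < b \<and> b < c \<and> c \<le> 31 \<and> c = xor a b}"
  unfolding distinguished_triples_def by (simp only: trip_eq)

lemma def5: "defective_triples 5 = {{a,b,c} | a b c. 1 \<le> a \<and> a < b \<and> b < c \<and> c \<le> 31 \<and> c = xor a b \<and> a + b \<noteq> c}"
  unfolding defective_triples_def by (simp only: trip_eq2)

lemma upt32: "[0..<32] = [0,1,2,3,4,5,6,7,8,9,10,11,12,13,14,15,16,17,18,19,20,21,22,23,24,25,26,27,28,29,30,31]" by code_simp

lemma Dbrute: "\<forall>a<32. \<forall>b<32. (1\<le>a \<and> a<b \<and> b < xor a b \<and> xor a b \<le> 31 \<and> a + b \<noteq> xor a b) \<longrightarrow> (a,b,xor a b) \<in> set DTl"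
  unfolding all_upt upt32 by (simp add: DTl_def)

lemma Dsound: "\<forall>t\<in>set DTl. case t of (a,b,c) \<Rightarrow> 1 \<le> a \<and> a < b \<and> b < c \<and> c \<le> 31 \<and> c = xor a b \<and> a + b \<noteq> c"
  by (simp add: DTl_def)

lemma D5: "defective_triples 5 = tri3 ` set DTl"
proof (rule set_eqI)
  fix x
  show "x \<in> defective_triples 5 \<longleftrightarrow> x \<in> tri3 ` set DTl"
  proof
    assume "x \<in> defective_triples 5"
    then obtain a b c where h: "x = {a,b,c}" "1 \<le> a" "a < b" "b < c" "c \<le> 31" "c = xor a b" "a + b \<noteq> c"
      unfolding def5 by blast
    then have "(a,b,c) \<in> set DTl" using Dbrute by simp
    then show "x \<in> tri3 ` set DTl" using h(1) unfolding tri3_def by force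
  next
    assume "x \<in> tri3 ` set DTl"
    then obtain a b c where t: "(a,b,c) \<in> set DTl" "x = {a,b,c}" by (auto simp: tri3_def)
    then have "1 \<le> a \<and> a < b \<and> b < c \<and> c \<le> 31 \<and> c = xor a b \<and> a + b \<noteq> c"
      using Dsound by fastforce
    then show "x \<in> defective_triples 5" using t(2) unfolding def5 by blast
  qed
qed

lemma distinct_DTl: "distinct DTl" by (simp add: DTl_def)
lemma sorted_DTl: "set DTl \<subseteq> {(a,b,c). a<b \<and> b<c}" using Dsound by auto

lemma K2set: "set K2l = {3, 5, 6, 9, 10, 12, 15, 17, 18, 20, 23, 24, 27, 29, 30}" by (simp add: K2l_def)

lemma img_filter: "{T \<in> f ` set xs. P T} = f ` set (filter (\<lambda>t. P (f t)) xs)" by auto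

lemma L5: "{T \<in> defective_triples 5. T \<subseteq> {3, 5, 6, 9, 10, 12, 15, 17, 18, 20, 23, 24, 27, 29, 30}} = tri3 ` set LTl"
proof -
  have "filter (\<lambda>t. tri3 t \<subseteq> {3, 5, 6, 9, 10, 12, 15, 17, 18, 20, 23, 24, 27, 29, 30}) DTl = LTl"
    by (simp add: DTl_def LTl_def tri3_def)
  then show ?thesis unfolding D5 img_filter by (simp only:)
qed

lemma countD: "(\<forall>a\<in>{7, 11, 13, 14, 19, 21, 22, 25, 26, 28::nat}. length (filter (\<lambda>t. a \<in> tri3 t) DTl) = 9) \<and>
  (\<forall>a\<in>{3, 5, 6, 9, 10, 12, 15, 17, 18, 20, 23, 24, 27, 29, 30::nat}. length (filter (\<lambda>t. a \<in> tri3 t) DTl) = 7) \<and>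
  (\<forall>a\<in>{1, 2, 4, 8, 16, 31::nat}. length (filter (\<lambda>t. a \<in> tri3 t) DTl) = 0)"
  by (simp add: DTl_def tri3_def)

lemma G2fin: "finite (G2_points n)" "finite (G2_lines n)"
  by (rule finite_subset[of _ "Pow {1..n}"]; auto simp: G2_points_def G2_lines_def)+

lemma G2card: "card (G2_points n) = n choose 2" "card (G2_lines n) = n choose 3"
  unfolding G2_points_def G2_lines_def using n_subsets[of "{1..n}"] by simp_all

lemma ch: "(6::nat) choose 2 = 15" "(6::nat) choose 3 = 20" "(5::nat) choose 2 = 10" "(5::nat) choose 3 = 10" "(3::nat) choose 2 = 3"
  by code_simp+

lemma G2iso:
  assumes "finite P1" "finite L1" "inj_on f P1" "\<forall>p\<in>P1. f p \<subseteq> {1..n} \<and> card (f p) = 2"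
    "card P1 = n choose 2"
    "\<forall>l\<in>L1. l \<subseteq> P1 \<and> card l = 3" "\<forall>l\<in>L1. \<Union>(f ` l) \<subseteq> {1..n} \<and> card (\<Union>(f ` l)) = 3" "card L1 = n choose 3"
  shows "incidence_iso P1 L1 (\<in>) (G2_points n) (G2_lines n) (\<subseteq>)"
proof -
  define g where "g l = \<Union>(f ` l)" for l
  have inc: "p \<in> l \<longleftrightarrow> f p \<subseteq> g l" if pl: "p \<in> P1" "l \<in> L1" for p l
  proof
    assume "p \<in> l" then show "f p \<subseteq> g l" by (auto simp: g_def)
  next
    assume fp: "f p \<subseteq> g l"
    have lP: "l \<subseteq> P1" "card l = 3" using assms(6) pl by auto
    have gl: "card (g l) = 3" using assms(7) pl by (auto simp: g_def)
    have fin: "finite (g l)" using gl card.infinite by fastforce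
    have "f ` l \<subseteq> {S. S \<subseteq> g l \<and> card S = 2}" using lP assms(4) by (auto simp: g_def)
    moreover have "card (f ` l) = 3" using lP card_image[OF inj_on_subset[OF assms(3) lP(1)]] by simp
    moreover have "card {S. S \<subseteq> g l \<and> card S = 2} = 3" using n_subsets[OF fin, of 2] gl ch(5) by simp
    moreover have "finite {S. S \<subseteq> g l \<and> card S = 2}" using fin by simp
    ultimately have "f ` l = {S. S \<subseteq> g l \<and> card S = 2}" by (metis card_subset_eq)
    moreover have "f p \<in> {S. S \<subseteq> g l \<and> card S = 2}" using fp assms(4) pl by auto
    ultimately have "f p \<in> f ` l" by simp
    then obtain q where "q \<in> l" "f p = f q" by auto
    then show "p \<in> l" using assms(3) lP(1) pl(1) by (metis inj_onD subsetD)
  qed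
  have ig: "inj_on g L1"
  proof (rule inj_onI)
    fix l l' assume h: "l \<in> L1" "l' \<in> L1" "g l = g l'"
    have "\<forall>p\<in>P1. p \<in> l \<longleftrightarrow> p \<in> l'" using inc h by simp
    then show "l = l'" using assms(6) h(1,2) by blast
  qed
  have "f ` P1 \<subseteq> G2_points n" using assms(4) by (auto simp: G2_points_def)
  moreover have "card (f ` P1) = card (G2_points n)"
    using card_image[OF assms(3)] assms(5) G2card by simp
  ultimately have "f ` P1 = G2_points n" by (metis card_subset_eq G2fin(1))
  then have bf: "bij_betw f P1 (G2_points n)" using assms(3) by (simp add: bij_betw_def)
  have "g ` L1 \<subseteq> G2_lines n" using assms(7) by (auto simp: G2_lines_def g_def)
  moreover have "card (g ` L1) = card (G2_lines n)"
    using card_image[OF ig] assms(8) G2card by simp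
  ultimately have "g ` L1 = G2_lines n" by (metis card_subset_eq G2fin(2))
  then have bg: "bij_betw g L1 (G2_lines n)" using ig by (simp add: bij_betw_def)
  show ?thesis unfolding incidence_iso_def using bf bg inc by blast
qed

lemma inj_tri3_img: "\<forall>s\<in>set xs. \<forall>t\<in>set xs. g (tri3 s) = g (tri3 t) \<longrightarrow> s = t \<Longrightarrow> inj_on g (tri3 ` set xs)"
  by (auto simp: inj_on_def)

definition pq :: "nat \<Rightarrow> nat \<times> nat" where "pq a = (if a = 3 then (1,2) else if a = 5 then (1,3) else if a = 6 then (2,3) else if a = 9 then (1,4) else if a = 10 then (2,4) else if a = 12 then (3,4) else if a = 15 then (5,6) else if a = 17 then (1,5) else if a = 18 then (2,5) else if a = 20 then (3,5) else if a = 23 then (4,6) else if a = 24 then (4,5) else if a = 27 then (3,6) else if a = 29 then (2,6) else if a = 30 then (1,6) else (0,0))"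
definition PP :: "nat \<Rightarrow> nat set" where "PP a = (case pq a of (i,j) \<Rightarrow> {i,j})"
definition GL :: "nat set \<Rightarrow> nat set" where "GL l = \<Union> (PP ` l)"


lemma inj_pairs:
  fixes q :: "'a \<Rightarrow> nat \<times> nat"
  assumes "distinct (map q xs)" "\<forall>a\<in>set xs. fst (q a) < snd (q a)"
  shows "inj_on (\<lambda>a. case q a of (i,j) \<Rightarrow> {i,j}) (set xs)"
proof (rule inj_onI)
  fix a b assume ab: "a \<in> set xs" "b \<in> set xs" "(case q a of (i,j) \<Rightarrow> {i,j}) = (case q b of (i,j) \<Rightarrow> {i,j})"
  have "inj_on q (set xs)" using assms(1) by (simp add: distinct_map)
  moreover have "q a = q b"
    using ab bspec[OF assms(2) ab(1)] bspec[OF assms(2) ab(2)]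
    by (cases "q a"; cases "q b") (auto simp: doubleton_eq_iff)
  ultimately show "a = b" using ab by (meson inj_onD)
qed

lemma iso6: "incidence_iso (set K2l) (tri3 ` set LTl) (\<in>) (G2_points 6) (G2_lines 6) (\<subseteq>)"
proof (rule G2iso)
  show "inj_on PP (set K2l)" unfolding PP_def
    by (rule inj_pairs) (simp_all add: K2l_def pq_def)
  show "\<forall>p\<in>set K2l. PP p \<subseteq> {1..6} \<and> card (PP p) = 2" by (simp add: K2l_def PP_def pq_def)
  show "card (set K2l) = 6 choose 2" by (simp add: K2l_def ch)
  show "\<forall>l\<in>tri3 ` set LTl. l \<subseteq> set K2l \<and> card l = 3"
    by (simp add: LTl_def tri3_def K2l_def)
  show "\<forall>l\<in>tri3 ` set LTl. \<Union>(PP ` l) \<subseteq> {1..6} \<and> card (\<Union>(PP ` l)) = 3"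
    by (simp add: LTl_def tri3_def PP_def pq_def card_insert_if)
  show "card (tri3 ` set LTl) = 6 choose 3" using card_tri3'[OF distinct_LTl sorted_LTl]
    by (simp add: LTl_def ch)
qed auto

lemma distinct_K2l: "distinct K2l" by (simp add: K2l_def)
lemma LTl_K2: "\<forall>t\<in>set LTl. tri3 t \<subseteq> set K2l" by (simp add: LTl_def K2l_def tri3_def)

lemma config: "is_configuration (set K2l) (tri3 ` set LTl) 15 4 20 3"
proof -
  have c1: "\<forall>p\<in>set K2l. length (filter (\<lambda>t. p \<in> tri3 t) LTl) = 4"
    by (simp add: K2l_def LTl_def tri3_def)
  have c2: "\<forall>p\<in>set K2l. \<forall>q\<in>set K2l. p \<noteq> q \<longrightarrow> length (filter (\<lambda>t. p \<in> tri3 t \<and> q \<in> tri3 t) LTl) \<le> 1"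
    by (simp add: K2l_def LTl_def tri3_def)
  show ?thesis unfolding is_configuration_def
    using card_tri3[OF distinct_LTl sorted_LTl] card_tri3'[OF distinct_LTl sorted_LTl] c1 c2
    by (simp add: K2l_def LTl_def tri3_def)
qed

abbreviation "HYP \<equiv> geom_hyperplanes (set K2l) (tri3 ` set LTl)"

lemma hyp_iff: "H \<in> HYP \<longleftrightarrow> H \<subseteq> set K2l \<and> H \<noteq> set K2l \<and>
   (\<forall>t\<in>set LTl. case t of (x,y,z) \<Rightarrow> (x\<in>H \<longleftrightarrow> (y\<in>H \<longleftrightarrow> z\<in>H)))"
proof -
  have "(\<forall>l\<in>tri3 ` set LTl. l \<subseteq> H \<or> card (l \<inter> H) = 1) \<longleftrightarrow>
        (\<forall>t\<in>set LTl. case t of (x,y,z) \<Rightarrow> (x\<in>H \<longleftrightarrow> (y\<in>H \<longleftrightarrow> z\<in>H)))"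
  proof -
    have "\<forall>t\<in>set LTl. (tri3 t \<subseteq> H \<or> card (tri3 t \<inter> H) = 1) \<longleftrightarrow> (case t of (x,y,z) \<Rightarrow> (x\<in>H \<longleftrightarrow> (y\<in>H \<longleftrightarrow> z\<in>H)))"
    proof
      fix t assume tL: "t \<in> set LTl"
      obtain x y z where t0: "t = (x,y,z)" by (metis prod_cases3)
      have t: "t = (x,y,z)" "x<y" "y<z" using sorted_LTl tL t0 by auto
      show "(tri3 t \<subseteq> H \<or> card (tri3 t \<inter> H) = 1) \<longleftrightarrow> (case t of (x,y,z) \<Rightarrow> (x\<in>H \<longleftrightarrow> (y\<in>H \<longleftrightarrow> z\<in>H)))"
        using par3[of x y z H] t by (simp add: tri3_def)
    qed
    then show ?thesis by auto
  qed
  then show ?thesis unfolding geom_hyperplanes_def by auto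
qed

lemma Hc_hyp: "c \<in> {1..31} \<Longrightarrow> Hc c \<in> HYP"
proof -
  assume c: "c \<in> {1..31}"
  obtain k where k: "k < 5" "bit c k" using nz_bit5[of c] c by auto
  have "pt k 5 \<in> set K2l" "pp (pt k 5) = (k,5)" using pt_ok[of k 5] k by auto
  moreover have "\<not> bit c 5" using bit5[of c 5] c by simp
  ultimately have "pt k 5 \<notin> Hc c" "pt k 5 \<in> set K2l" using k by (auto simp: Hc_mem mem_def)
  then have ne: "Hc c \<noteq> set K2l" by blast
  have "\<forall>t\<in>set LTl. case t of (x,y,z) \<Rightarrow> (x\<in>Hc c \<longleftrightarrow> (y\<in>Hc c \<longleftrightarrow> z\<in>Hc c))"
  proof
    fix t assume t: "t \<in> set LTl"
    obtain x y z where xyz: "t = (x,y,z)" by (cases t) auto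
    have "x \<in> set K2l" "y \<in> set K2l" "z \<in> set K2l" using LTl_K2 t xyz by (auto simp: tri3_def)
    then show "case t of (x,y,z) \<Rightarrow> (x\<in>Hc c \<longleftrightarrow> (y\<in>Hc c \<longleftrightarrow> z\<in>Hc c))"
      using line_par t xyz by (auto simp: Hc_mem)
  qed
  then show ?thesis using ne Hc_sub hyp_iff by blast
qed

lemma Hc0: "Hc 0 = set K2l" by (auto simp: Hc_def mem_def)

lemma hyp_Hc:
  assumes H: "H \<in> HYP" shows "\<exists>c\<in>{1..31}. H = Hc c"
proof -
  have sub: "H \<subseteq> set K2l" and ne: "H \<noteq> set K2l"
   and par: "\<forall>t\<in>set LTl. case t of (x,y,z) \<Rightarrow> (x\<in>H \<longleftrightarrow> (y\<in>H \<longleftrightarrow> z\<in>H))"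
    using H hyp_iff by auto
  have P: "3\<in>H \<longleftrightarrow> (29\<in>H \<longleftrightarrow> 30\<in>H)" "5\<in>H \<longleftrightarrow> (27\<in>H \<longleftrightarrow> 30\<in>H)" "6\<in>H \<longleftrightarrow> (27\<in>H \<longleftrightarrow> 29\<in>H)"
    "9\<in>H \<longleftrightarrow> (23\<in>H \<longleftrightarrow> 30\<in>H)" "10\<in>H \<longleftrightarrow> (23\<in>H \<longleftrightarrow> 29\<in>H)" "12\<in>H \<longleftrightarrow> (23\<in>H \<longleftrightarrow> 27\<in>H)"
    "17\<in>H \<longleftrightarrow> (15\<in>H \<longleftrightarrow> 30\<in>H)" "18\<in>H \<longleftrightarrow> (15\<in>H \<longleftrightarrow> 29\<in>H)" "20\<in>H \<longleftrightarrow> (15\<in>H \<longleftrightarrow> 27\<in>H)"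
    "24\<in>H \<longleftrightarrow> (15\<in>H \<longleftrightarrow> 23\<in>H)"
    using par by (simp_all add: LTl_def) blast+
  define c :: nat where "c = (if 30\<in>H then (if 29\<in>H then (if 27\<in>H then (if 23\<in>H then (if 15\<in>H then 0 else 16) else (if 15\<in>H then 8 else 24)) else (if 23\<in>H then (if 15\<in>H then 4 else 20) else (if 15\<in>H then 12 else 28))) else (if 27\<in>H then (if 23\<in>H then (if 15\<in>H then 2 else 18) else (if 15\<in>H then 10 else 26)) else (if 23\<in>H then (if 15\<in>H then 6 else 22) else (if 15\<in>H then 14 else 30)))) else (if 29\<in>H then (if 27\<in>H then (if 23\<in>H then (if 15\<in>H then 1 else 17) else (if 15\<in>H then 9 else 25)) else (if 23\<in>H then (if 15\<in>H then 5 else 21) else (if 15\<in>H then 13 else 29))) else (if 27\<in>H then (if 23\<in>H then (if 15\<in>H then 3 else 19) else (if 15\<in>H then 11 else 27)) else (if 23\<in>H then (if 15\<in>H then 7 else 23) else (if 15\<in>H then 15 else 31)))))"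
  have all: "\<forall>a\<in>set K2l. a \<in> H \<longleftrightarrow> mem c a"
    unfolding c_def
    by (cases "30\<in>H"; cases "29\<in>H"; cases "27\<in>H"; cases "23\<in>H"; cases "15\<in>H")
       (simp_all add: P K2l_def mem_def pp_def bit_0)
  have HH: "H = Hc c" using all sub by (auto simp: Hc_mem)
  have "c \<le> 31" unfolding c_def by simp
  moreover have "c \<noteq> 0" using HH ne Hc0 by auto
  ultimately show ?thesis using HH by auto
qed

lemma HYP_eq: "HYP = Hc ` {1..31}"
proof (rule set_eqI)
  fix H show "H \<in> HYP \<longleftrightarrow> H \<in> Hc ` {1..31}"
  proof
    assume "H \<in> HYP" then obtain c where "c \<in> {1..31}" "H = Hc c" using hyp_Hc by blast
    then show "H \<in> Hc ` {1..31}" by blast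
  next
    assume "H \<in> Hc ` {1..31}" then obtain c where "c \<in> {1..31}" "H = Hc c" by blast
    then show "H \<in> HYP" using Hc_hyp by simp
  qed
qed

lemma xor_zero_iff: "xor (c::nat) d = 0 \<longleftrightarrow> c = d"
proof
  assume "xor c d = 0"
  then have "\<forall>n. bit (xor c d) n = False" by simp
  then show "c = d" by (intro bit_eqI) (auto simp: bit_xor_iff)
qed simp

lemma xor_range: "c \<in> {1..31} \<Longrightarrow> d \<in> {1..31} \<Longrightarrow> c \<noteq> d \<Longrightarrow> xor (c::nat) d \<in> {1..31}"
  using xor_lt[of c 5 d] xor_zero_iff[of c d] by auto

lemma xor_cancel: "xor (xor (c::nat) d) d = c" "xor (xor (c::nat) d) c = d"
  by (rule bit_eqI, auto simp: bit_xor_iff)+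

lemma xor_cancel2: "xor (c::nat) (xor c d) = d" "xor (d::nat) (xor c d) = c"
  by (rule bit_eqI, auto simp: bit_xor_iff)+

lemma xor_ne: "c \<in> {1..31} \<Longrightarrow> d \<in> {1..31} \<Longrightarrow> xor (c::nat) d \<noteq> c \<and> xor c d \<noteq> d"
proof -
  assume c: "c \<in> {1..31}" and d: "d \<in> {1..31}"
  have "xor c d = c \<Longrightarrow> d = 0" using xor_cancel2(1)[of c d] by (simp add: xor_self_eq)
  moreover have "xor c d = d \<Longrightarrow> c = 0" using xor_cancel2(2)[of d c] by (simp add: xor_self_eq)
  ultimately show ?thesis using c d by auto
qed

lemma VL:
  assumes c: "c \<in> {1..31}" and d: "d \<in> {1..31}" and cd: "c \<noteq> d"
  shows "veldkamp_line (set K2l) (tri3 ` set LTl) (Hc c) (Hc d) = Hc ` {c, d, xor c d}"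
proof (rule set_eqI)
  fix H
  show "H \<in> veldkamp_line (set K2l) (tri3 ` set LTl) (Hc c) (Hc d) \<longleftrightarrow> H \<in> Hc ` {c, d, xor c d}"
  proof
    assume "H \<in> veldkamp_line (set K2l) (tri3 ` set LTl) (Hc c) (Hc d)"
    then have H: "H \<in> HYP" and cond: "H = Hc c \<or> H = Hc d \<or>
        (Hc c \<inter> Hc d = Hc c \<inter> H \<and> Hc c \<inter> Hc d = Hc d \<inter> H)"
      unfolding veldkamp_line_def by auto
    obtain e where e: "e \<in> {1..31}" "H = Hc e" using hyp_Hc[OF H] by auto
    show "H \<in> Hc ` {c, d, xor c d}"
    proof (cases "H = Hc c \<or> H = Hc d")
      case True then show ?thesis by auto
    next
      case False
      then have I1: "Hc c \<inter> Hc d = Hc c \<inter> Hc e" and I2: "Hc c \<inter> Hc d = Hc d \<inter> Hc e"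
        using cond e by auto
      define x where "x = xor (xor c d) e"
      have mx: "mem x a \<longleftrightarrow> ((mem c a \<longleftrightarrow> mem d a) \<longleftrightarrow> mem e a)" for a
        by (simp add: x_def mem_xor)
      show ?thesis
      proof (cases "x = 0")
        case True
        then have "e = xor c d" unfolding x_def by (simp add: xor_zero_iff)
        then show ?thesis using e by auto
      next
        case False
        have "xor c d < 2^5" using xor_lt[of c 5 d] c d by simp
        then have "x < 2^5" using xor_lt[of "xor c d" 5 e] e unfolding x_def by simp
        then have xr: "x \<in> {1..31}" using False by simp
        have "Hc c \<subseteq> Hc x"
        proof
          fix a assume a: "a \<in> Hc c"
          have "mem d a \<longleftrightarrow> mem e a"
          proof
            assume "mem d a" then have "a \<in> Hc c \<inter> Hc d" using a by (auto simp: Hc_mem)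
            then show "mem e a" using I1 by (auto simp: Hc_mem)
          next
            assume "mem e a" then have "a \<in> Hc c \<inter> Hc e" using a by (auto simp: Hc_mem)
            then show "mem d a" using I1 by (auto simp: Hc_mem)
          qed
          then show "a \<in> Hc x" using a mx by (auto simp: Hc_mem)
        qed
        then have "x = c" using Csub c xr by blast
        have "Hc d \<subseteq> Hc x"
        proof
          fix a assume a: "a \<in> Hc d"
          have "mem c a \<longleftrightarrow> mem e a"
          proof
            assume "mem c a" then have "a \<in> Hc c \<inter> Hc d" using a by (auto simp: Hc_mem)
            then show "mem e a" using I2 by (auto simp: Hc_mem)
          next
            assume "mem e a" then have "a \<in> Hc d \<inter> Hc e" using a by (auto simp: Hc_mem)
            then show "mem c a" using I2 by (auto simp: Hc_mem)
          qed
          then show "a \<in> Hc x" using a mx by (auto simp: Hc_mem)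
        qed
        then have "x = d" using Csub d xr by blast
        then show ?thesis using \<open>x = c\<close> cd by simp
      qed
    qed
  next
    assume "H \<in> Hc ` {c, d, xor c d}"
    moreover have "Hc c \<in> HYP" "Hc d \<in> HYP" "Hc (xor c d) \<in> HYP"
      using Hc_hyp xor_range c d cd by auto
    moreover have "Hc c \<inter> Hc d = Hc c \<inter> Hc (xor c d)" "Hc c \<inter> Hc d = Hc d \<inter> Hc (xor c d)"
      by (auto simp: Hc_mem mem_xor)
    ultimately show "H \<in> veldkamp_line (set K2l) (tri3 ` set LTl) (Hc c) (Hc d)"
      unfolding veldkamp_line_def by auto
  qed
qed

lemma VLs: "veldkamp_lines (set K2l) (tri3 ` set LTl) =
   {Hc ` {c, d, xor c d} | c d. c \<in> {1..31} \<and> d \<in> {1..31} \<and> c \<noteq> d}"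
proof (rule set_eqI)
  fix V show "V \<in> veldkamp_lines (set K2l) (tri3 ` set LTl) \<longleftrightarrow>
    V \<in> {Hc ` {c, d, xor c d} | c d. c \<in> {1..31} \<and> d \<in> {1..31} \<and> c \<noteq> d}"
  proof
    assume "V \<in> veldkamp_lines (set K2l) (tri3 ` set LTl)"
    then obtain H1 H2 where h: "V = veldkamp_line (set K2l) (tri3 ` set LTl) H1 H2" "H1 \<in> HYP" "H2 \<in> HYP" "H1 \<noteq> H2"
      unfolding veldkamp_lines_def by blast
    obtain c d where "c \<in> {1..31}" "d \<in> {1..31}" "H1 = Hc c" "H2 = Hc d" using h(2,3) hyp_Hc by metis
    moreover then have "c \<noteq> d" using h(4) by blast
    ultimately show "V \<in> {Hc ` {c, d, xor c d} | c d. c \<in> {1..31} \<and> d \<in> {1..31} \<and> c \<noteq> d}"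
      using VL h(1) by blast
  next
    assume "V \<in> {Hc ` {c, d, xor c d} | c d. c \<in> {1..31} \<and> d \<in> {1..31} \<and> c \<noteq> d}"
    then obtain c d where cd: "V = Hc ` {c, d, xor c d}" "c \<in> {1..31}" "d \<in> {1..31}" "c \<noteq> d" by blast
    have "Hc c \<noteq> Hc d" using cd Hc_inj by (meson inj_onD)
    moreover have "Hc c \<in> HYP" "Hc d \<in> HYP" using Hc_hyp cd by auto
    ultimately show "V \<in> veldkamp_lines (set K2l) (tri3 ` set LTl)"
      unfolding veldkamp_lines_def using VL[OF cd(2,3,4)] cd(1) by blast
  qed
qed

lemma sort3:
  fixes x y z :: nat
  assumes "x \<noteq> y" "y \<noteq> z" "x \<noteq> z"
    "P x y z" "P y x z" "P x z y" "P z x y" "P y z x" "P z y x"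
  shows "\<exists>u v w. u < v \<and> v < w \<and> {x,y,z} = {u,v,w} \<and> P u v w"
proof (cases x y rule: linorder_cases)
  case less
  show ?thesis
  proof (cases y z rule: linorder_cases)
    case less then show ?thesis using \<open>x<y\<close> assms by blast
  next
    case equal then show ?thesis using assms by simp
  next
    case greater
    show ?thesis
    proof (cases x z rule: linorder_cases)
      case less then show ?thesis using \<open>x<y\<close> greater assms by (metis insert_commute)
    next
      case equal then show ?thesis using assms by simp
    next
      case greater then show ?thesis using \<open>x<y\<close> assms by (metis insert_commute)
    qed
  qed
next
  case equal then show ?thesis using assms by simp
next
  case greater
  show ?thesis
  proof (cases x z rule: linorder_cases)
    case less then show ?thesis using greater assms by (metis insert_commute)
  next
    case equal then show ?thesis using assms by simp
  next
    case xz: greater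
    show ?thesis
    proof (cases y z rule: linorder_cases)
      case less then show ?thesis using greater xz assms by (metis insert_commute)
    next
      case equal then show ?thesis using assms by simp
    next
      case greater then show ?thesis using \<open>y<x\<close> xz assms by (metis insert_commute)
    qed
  qed
qed

lemma dist_eq: "{{c, d, xor c d} | (c::nat) d. c \<in> {1..31} \<and> d \<in> {1..31} \<and> c \<noteq> d} =
   {{a,b,c} | a b c. 1 \<le> a \<and> a < b \<and> b < c \<and> c \<le> 31 \<and> c = xor (a::nat) b}"
proof (rule set_eqI, rule iffI)
  fix T :: "nat set" assume "T \<in> {{c, d, xor c d} | c d. c \<in> {1..31} \<and> d \<in> {1..31} \<and> c \<noteq> d}"
  then obtain c d :: nat where cd: "T = {c, d, xor c d}" "c \<in> {1..31}" "d \<in> {1..31}" "c \<noteq> d" by blast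
  have r: "xor c d \<in> {1..31}" using xor_range cd by blast
  have ne: "xor c d \<noteq> c" "xor c d \<noteq> d" using xor_ne cd by auto
  have comm: "xor d c = xor c d" by (rule xor.commute)
  have cr: "1 \<le> c" "c \<le> 31" "1 \<le> d" "d \<le> 31" "1 \<le> xor c d" "xor c d \<le> 31" using cd r by auto
  let ?P = "\<lambda>u v w. w = xor u v \<and> 1 \<le> u \<and> w \<le> 31"
  have "\<exists>u v w. u < v \<and> v < w \<and> {c, d, xor c d} = {u,v,w} \<and> ?P u v w"
  proof (rule sort3)
    show "c \<noteq> d" "d \<noteq> xor c d" "c \<noteq> xor c d" using cd ne by auto
    show "?P c d (xor c d)" "?P d c (xor c d)" "?P c (xor c d) d" "?P (xor c d) c d"
       "?P d (xor c d) c" "?P (xor c d) d c"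
      using cr by (simp_all only: xor_cancel xor_cancel2 comm simp_thms)
  qed
  then show "T \<in> {{a,b,c} | a b c. 1 \<le> a \<and> a < b \<and> b < c \<and> c \<le> 31 \<and> c = xor (a::nat) b}"
    using cd(1) by blast
next
  fix T assume "T \<in> {{a,b,c} | a b c. 1 \<le> a \<and> a < b \<and> b < c \<and> c \<le> 31 \<and> c = xor (a::nat) b}"
  then obtain a b where ab: "T = {a,b,xor a b}" "1 \<le> a" "a < b" "b < xor a b" "xor a b \<le> 31" by blast
  then show "T \<in> {{c, d, xor c d} | c d. c \<in> {1..31} \<and> d \<in> {1..31} \<and> c \<noteq> d}"
    by (intro CollectI exI[of _ a] exI[of _ b]) auto
qed




definition phi :: "nat set \<Rightarrow> nat" where "phi = inv_into {1..31} Hc"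

lemma phi_Hc: "c \<in> {1..31} \<Longrightarrow> phi (Hc c) = c"
  unfolding phi_def by (rule inv_into_f_f[OF Hc_inj])

lemma bij_phi: "bij_betw phi HYP {1..31}"
  unfolding phi_def HYP_eq by (rule bij_betw_inv_into[OF inj_on_imp_bij_betw[OF Hc_inj]])

lemma phi_img: "S \<subseteq> {1..31} \<Longrightarrow> phi ` (Hc ` S) = S"
proof -
  assume S: "S \<subseteq> {1..31}"
  have "phi ` (Hc ` S) = (\<lambda>c. phi (Hc c)) ` S" by (simp add: image_image)
  also have "\<dots> = (\<lambda>c. c) ` S" using S phi_Hc by (intro image_cong) auto
  finally show ?thesis by simp
qed

lemma VL_sub: "V \<in> veldkamp_lines (set K2l) (tri3 ` set LTl) \<Longrightarrow> V \<subseteq> HYP"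
  unfolding veldkamp_lines_def veldkamp_line_def by auto

lemma bij_VL: "bij_betw (\<lambda>V. phi ` V) (veldkamp_lines (set K2l) (tri3 ` set LTl)) (distinguished_triples 5)"
proof -
  have ip: "inj_on phi HYP" using bij_phi by (simp add: bij_betw_def)
  have inj: "inj_on (\<lambda>V. phi ` V) (veldkamp_lines (set K2l) (tri3 ` set LTl))"
  proof (rule inj_onI)
    fix V W assume h: "V \<in> veldkamp_lines (set K2l) (tri3 ` set LTl)" "W \<in> veldkamp_lines (set K2l) (tri3 ` set LTl)"
       "phi ` V = phi ` W"
    show "V = W" using inj_on_image_eq_iff[OF ip VL_sub[OF h(1)] VL_sub[OF h(2)]] h(3) by simp
  qed
  have "(\<lambda>V. phi ` V) ` (veldkamp_lines (set K2l) (tri3 ` set LTl)) =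
     {{c, d, xor c d} | (c::nat) d. c \<in> {1..31} \<and> d \<in> {1..31} \<and> c \<noteq> d}"
  proof (rule set_eqI, rule iffI)
    fix T assume "T \<in> (\<lambda>V. phi ` V) ` (veldkamp_lines (set K2l) (tri3 ` set LTl))"
    then obtain c d where cd: "T = phi ` (Hc ` {c, d, xor c d})" "c \<in> {1..31}" "d \<in> {1..31}" "c \<noteq> d"
      unfolding VLs by blast
    have "{c, d, xor c d} \<subseteq> {1..31}" using cd xor_range by auto
    then have "phi ` (Hc ` {c, d, xor c d}) = {c, d, xor c d}" by (rule phi_img)
    then have "T = {c, d, xor c d}" using cd(1) by (simp only:)
    then show "T \<in> {{c, d, xor c d} | (c::nat) d. c \<in> {1..31} \<and> d \<in> {1..31} \<and> c \<noteq> d}" using cd by blast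
  next
    fix T assume "T \<in> {{c, d, xor c d} | (c::nat) d. c \<in> {1..31} \<and> d \<in> {1..31} \<and> c \<noteq> d}"
    then obtain c d :: nat where cd: "T = {c, d, xor c d}" "c \<in> {1..31}" "d \<in> {1..31}" "c \<noteq> d" by blast
    have "{c, d, xor c d} \<subseteq> {1..31}" using cd xor_range by auto
    then have "phi ` (Hc ` {c, d, xor c d}) = {c, d, xor c d}" by (rule phi_img)
    then have "T = phi ` (Hc ` {c, d, xor c d})" using cd(1) by (simp only:)
    moreover have "Hc ` {c, d, xor c d} \<in> veldkamp_lines (set K2l) (tri3 ` set LTl)"
      unfolding VLs using cd by blast
    ultimately show "T \<in> (\<lambda>V. phi ` V) ` (veldkamp_lines (set K2l) (tri3 ` set LTl))" by blast
  qed
  then show ?thesis using inj unfolding bij_betw_def dist5 dist_eq by simp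
qed

lemma card_Hc: "card (Hc c) = length (filter (mem c) K2l)"
  unfolding Hc_def by (rule distinct_card) (simp add: distinct_K2l)

lemma l31: "[1..<32] = [1,2,3,4,5,6,7,8,9,10,11,12,13,14,15,16,17,18,19,20,21,22,23,24,25,26,27,28,29,30,31]" by code_simp
lemma I31: "{1..31::nat} = set [1,2,3,4,5,6,7,8,9,10,11,12,13,14,15,16,17,18,19,20,21,22,23,24,25,26,27,28,29,30,31]"
proof -
  have "{1..31::nat} = set [1..<32]" by auto
  then show ?thesis by (simp only: l31)
qed

lemma HYP_card: "{H \<in> HYP. card H = k} = Hc ` {c \<in> {1..31}. length (filter (mem c) K2l) = k}"
  unfolding HYP_eq by (auto simp: card_Hc image_iff)

lemma sz_sets: "{c \<in> {1..31}. length (filter (mem c) K2l) = 6} = {7, 11, 13, 14, 19, 21, 22, 25, 26, 28}"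
  "{c \<in> {1..31}. length (filter (mem c) K2l) = 7} = {3, 5, 6, 9, 10, 12, 15, 17, 18, 20, 23, 24, 27, 29, 30}"
  "{c \<in> {1..31}. length (filter (mem c) K2l) = 10} = {1, 2, 4, 8, 16, 31}"
proof -
  have g: "{c \<in> {1..31}. P c} = set (filter P [1,2,3,4,5,6,7,8,9,10,11,12,13,14,15,16,17,18,19,20,21,22,23,24,25,26,27,28,29,30,31])" for P :: "nat \<Rightarrow> bool"
    by (simp only: I31 set_filter)
  have f: "filter (\<lambda>c. length (filter (mem c) K2l) = 6) [1,2,3,4,5,6,7,8,9,10,11,12,13,14,15,16,17,18,19,20,21,22,23,24,25,26,27,28,29,30,31] = [7, 11, 13, 14, 19, 21, 22, 25, 26, 28]"
     "filter (\<lambda>c. length (filter (mem c) K2l) = 7) [1,2,3,4,5,6,7,8,9,10,11,12,13,14,15,16,17,18,19,20,21,22,23,24,25,26,27,28,29,30,31] = [3, 5, 6, 9, 10, 12, 15, 17, 18, 20, 23, 24, 27, 29, 30]"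
     "filter (\<lambda>c. length (filter (mem c) K2l) = 10) [1,2,3,4,5,6,7,8,9,10,11,12,13,14,15,16,17,18,19,20,21,22,23,24,25,26,27,28,29,30,31] = [1, 2, 4, 8, 16, 31]"
    by (simp_all add: K2l_def mem_def pp_def bit_0)
  show "{c \<in> {1..31}. length (filter (mem c) K2l) = 6} = {7, 11, 13, 14, 19, 21, 22, 25, 26, 28}"
    "{c \<in> {1..31}. length (filter (mem c) K2l) = 7} = {3, 5, 6, 9, 10, 12, 15, 17, 18, 20, 23, 24, 27, 29, 30}"
    "{c \<in> {1..31}. length (filter (mem c) K2l) = 10} = {1, 2, 4, 8, 16, 31}"
    unfolding g f by simp_all
qed

lemma phi_sizes:
  "phi ` {H \<in> HYP. card H = 6} = {7, 11, 13, 14, 19, 21, 22, 25, 26, 28}"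
  "phi ` {H \<in> HYP. card H = 7} = {3, 5, 6, 9, 10, 12, 15, 17, 18, 20, 23, 24, 27, 29, 30}"
  "phi ` {H \<in> HYP. card H = 10} = {1, 2, 4, 8, 16, 31}"
proof -
  show "phi ` {H \<in> HYP. card H = 6} = {7, 11, 13, 14, 19, 21, 22, 25, 26, 28}"
    unfolding HYP_card sz_sets(1) by (rule phi_img) simp
  show "phi ` {H \<in> HYP. card H = 7} = {3, 5, 6, 9, 10, 12, 15, 17, 18, 20, 23, 24, 27, 29, 30}"
    unfolding HYP_card sz_sets(2) by (rule phi_img) simp
  show "phi ` {H \<in> HYP. card H = 10} = {1, 2, 4, 8, 16, 31}"
    unfolding HYP_card sz_sets(3) by (rule phi_img) simp
qed

definition w6 :: "nat \<Rightarrow> (nat \<times> nat \<times> nat) \<times> (nat \<times> nat \<times> nat)" where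
  "w6 c = (if c = 7 then ((3,5,6),(15,23,24)) else if c = 11 then ((3,9,10),(15,20,27)) else if c = 13 then ((5,9,12),(15,18,29)) else if c = 14 then ((6,10,12),(15,17,30)) else if c = 19 then ((3,17,18),(12,23,27)) else if c = 21 then ((5,17,20),(10,23,29)) else if c = 22 then ((6,18,20),(9,23,30)) else if c = 25 then ((6,27,29),(9,17,24)) else if c = 26 then ((5,27,30),(10,18,24)) else if c = 28 then ((3,29,30),(12,20,24)) else ((0,0,0),(0,0,0)))"

definition tl3 :: "nat \<times> nat \<times> nat \<Rightarrow> nat list" where "tl3 t = (case t of (a,b,c) \<Rightarrow> [a,b,c])"
lemma set_tl3: "set (tl3 t) = tri3 t" by (cases t) (simp add: tl3_def tri3_def)

lemma shape6_brute: "\<forall>c\<in>set [1,2,3,4,5,6,7,8,9,10,11,12,13,14,15,16,17,18,19,20,21,22,23,24,25,26,27,28,29,30,31]. length (filter (mem c) K2l) = 6 \<longrightarrow>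
   fst (w6 c) \<in> set LTl \<and> snd (w6 c) \<in> set LTl \<and> distinct (tl3 (fst (w6 c)) @ tl3 (snd (w6 c))) \<and>
   filter (mem c) K2l = sort (tl3 (fst (w6 c)) @ tl3 (snd (w6 c)))"
  by (simp add: K2l_def mem_def pp_def bit_0 w6_def LTl_def tl3_def del: distinct_append)

lemma shape6: "\<forall>H\<in>HYP. card H = 6 \<longrightarrow> (\<exists>l1\<in>tri3 ` set LTl. \<exists>l2\<in>tri3 ` set LTl. l1 \<inter> l2 = {} \<and> H = l1 \<union> l2)"
proof
  fix H assume "H \<in> HYP"
  then obtain c where c: "c \<in> {1..31}" "H = Hc c" using hyp_Hc by blast
  show "card H = 6 \<longrightarrow> (\<exists>l1\<in>tri3 ` set LTl. \<exists>l2\<in>tri3 ` set LTl. l1 \<inter> l2 = {} \<and> H = l1 \<union> l2)"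
  proof
    assume "card H = 6"
    then have "length (filter (mem c) K2l) = 6" using c card_Hc by simp
    then have h: "fst (w6 c) \<in> set LTl" "snd (w6 c) \<in> set LTl" "distinct (tl3 (fst (w6 c)) @ tl3 (snd (w6 c)))"
       "filter (mem c) K2l = sort (tl3 (fst (w6 c)) @ tl3 (snd (w6 c)))"
      using shape6_brute c(1) unfolding I31 by blast+
    have d: "set (tl3 (fst (w6 c))) \<inter> set (tl3 (snd (w6 c))) = {}"
      using h(3) by (simp only: distinct_append)
    have e: "set (filter (mem c) K2l) = set (tl3 (fst (w6 c))) \<union> set (tl3 (snd (w6 c)))"
      using h(4) by (simp only: set_sort set_append)
    have H: "H = set (filter (mem c) K2l)" using c(2) by (simp only: Hc_def)
    have i1: "tri3 (fst (w6 c)) \<in> tri3 ` set LTl" using h(1) by (rule imageI)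
    have i2: "tri3 (snd (w6 c)) \<in> tri3 ` set LTl" using h(2) by (rule imageI)
    have d': "tri3 (fst (w6 c)) \<inter> tri3 (snd (w6 c)) = {}" using d by (simp only: set_tl3)
    have e': "H = tri3 (fst (w6 c)) \<union> tri3 (snd (w6 c))" using H e by (simp only: set_tl3)
    show "\<exists>l1\<in>tri3 ` set LTl. \<exists>l2\<in>tri3 ` set LTl. l1 \<inter> l2 = {} \<and> H = l1 \<union> l2"
      using i1 i2 d' e' by blast
  qed
qed

lemma shape7_brute: "\<forall>c\<in>set [1,2,3,4,5,6,7,8,9,10,11,12,13,14,15,16,17,18,19,20,21,22,23,24,25,26,27,28,29,30,31]. length (filter (mem c) K2l) = 7 \<longrightarrow>
   c \<in> set K2l \<and> filter (mem c) K2l =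
     insort c (filter (\<lambda>q. q \<noteq> c \<and> \<not> list_ex (\<lambda>t. c \<in> set (tl3 t) \<and> q \<in> set (tl3 t)) LTl) K2l)"
  by (simp add: K2l_def mem_def pp_def bit_0 LTl_def tl3_def)

lemma shape7: "\<forall>H\<in>HYP. card H = 7 \<longrightarrow>
   (\<exists>p\<in>set K2l. H = insert p {q \<in> set K2l. q \<noteq> p \<and> \<not> (\<exists>l\<in>tri3 ` set LTl. p \<in> l \<and> q \<in> l)})"
proof
  fix H assume "H \<in> HYP"
  then obtain c where c: "c \<in> {1..31}" "H = Hc c" using hyp_Hc by blast
  show "card H = 7 \<longrightarrow> (\<exists>p\<in>set K2l. H = insert p {q \<in> set K2l. q \<noteq> p \<and> \<not> (\<exists>l\<in>tri3 ` set LTl. p \<in> l \<and> q \<in> l)})"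
  proof
    assume "card H = 7"
    then have "length (filter (mem c) K2l) = 7" using c card_Hc by simp
    then have h: "c \<in> set K2l" "filter (mem c) K2l =
     insort c (filter (\<lambda>q. q \<noteq> c \<and> \<not> list_ex (\<lambda>t. c \<in> set (tl3 t) \<and> q \<in> set (tl3 t)) LTl) K2l)"
      using shape7_brute c(1) unfolding I31 by blast+
    have H: "H = set (filter (mem c) K2l)" using c(2) by (simp only: Hc_def)
    have e: "set (filter (\<lambda>q. q \<noteq> c \<and> \<not> list_ex (\<lambda>t. c \<in> set (tl3 t) \<and> q \<in> set (tl3 t)) LTl) K2l)
       = {q \<in> set K2l. q \<noteq> c \<and> \<not> (\<exists>l\<in>tri3 ` set LTl. c \<in> l \<and> q \<in> l)}"
      by (auto simp: list_ex_iff set_tl3)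
    have "H = insert c {q \<in> set K2l. q \<noteq> c \<and> \<not> (\<exists>l\<in>tri3 ` set LTl. c \<in> l \<and> q \<in> l)}"
      using H h(2) e by (simp only: set_insort_key)
    then show "\<exists>p\<in>set K2l. H = insert p {q \<in> set K2l. q \<noteq> p \<and> \<not> (\<exists>l\<in>tri3 ` set LTl. p \<in> l \<and> q \<in> l)}"
      using h(1) by blast
  qed
qed




definition dm :: "nat \<Rightarrow> nat" where
  "dm c = (if c = 1 then 0 else if c = 2 then 1 else if c = 4 then 2 else if c = 8 then 3 else if c = 16 then 4 else 5)"
definition sx :: "nat \<Rightarrow> nat" where
  "sx x = (if x = 0 then 1 else if x = 1 then 2 else if x = 2 then 3 else if x = 3 then 4 else if x = 4 then 5 else 0)"
definition sg :: "nat \<Rightarrow> nat \<Rightarrow> nat" where "sg c x = (if x < dm c then sx x else x)"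
definition qd :: "nat \<Rightarrow> nat \<Rightarrow> nat \<times> nat" where "qd c a = (sg c (fst (pp a)), sg c (snd (pp a)))"
definition fd :: "nat \<Rightarrow> nat \<Rightarrow> nat set" where "fd c a = (case qd c a of (i,j) \<Rightarrow> {i,j})"

lemma BD: "\<forall>c\<in>set [1,2,4,8,16,31].
   distinct (map (qd c) (filter (mem c) K2l)) \<and>
   (\<forall>a\<in>set (filter (mem c) K2l). fst (qd c a) < snd (qd c a) \<and> fd c a \<subseteq> {1..5} \<and> card (fd c a) = 2) \<and>
   length (filter (mem c) K2l) = 10 \<and>
   length (filter (\<lambda>t. tri3 t \<subseteq> set (filter (mem c) K2l)) LTl) = 10 \<and>
   (\<forall>t\<in>set (filter (\<lambda>t. tri3 t \<subseteq> set (filter (mem c) K2l)) LTl).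
      \<Union>(fd c ` tri3 t) \<subseteq> {1..5} \<and> card (\<Union>(fd c ` tri3 t)) = 3)"
  by (simp add: K2l_def mem_def pp_def bit_0 LTl_def tri3_def qd_def fd_def sg_def sx_def dm_def card_insert_if)

lemma card_tri3_3: "t \<in> set LTl \<Longrightarrow> card (tri3 t) = 3"
  using sorted_LTl by (cases t) (auto simp: tri3_def)

lemma shape10: "\<forall>H\<in>HYP. card H = 10 \<longrightarrow>
   incidence_iso H {l \<in> tri3 ` set LTl. l \<subseteq> H} (\<in>) (G2_points 5) (G2_lines 5) (\<subseteq>)"
proof
  fix H assume "H \<in> HYP"
  then obtain c where c: "c \<in> {1..31}" "H = Hc c" using hyp_Hc by blast
  show "card H = 10 \<longrightarrow> incidence_iso H {l \<in> tri3 ` set LTl. l \<subseteq> H} (\<in>) (G2_points 5) (G2_lines 5) (\<subseteq>)"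
  proof
    assume "card H = 10"
    then have "length (filter (mem c) K2l) = 10" using c card_Hc by simp
    then have "c \<in> {c \<in> {1..31}. length (filter (mem c) K2l) = 10}" using c by simp
    then have "c \<in> set [1,2,4,8,16,31]" unfolding sz_sets by simp
    then have B: "distinct (map (qd c) (filter (mem c) K2l))"
      "\<forall>a\<in>set (filter (mem c) K2l). fst (qd c a) < snd (qd c a) \<and> fd c a \<subseteq> {1..5} \<and> card (fd c a) = 2"
      "length (filter (mem c) K2l) = 10"
      "length (filter (\<lambda>t. tri3 t \<subseteq> set (filter (mem c) K2l)) LTl) = 10"
      "\<forall>t\<in>set (filter (\<lambda>t. tri3 t \<subseteq> set (filter (mem c) K2l)) LTl).
         \<Union>(fd c ` tri3 t) \<subseteq> {1..5} \<and> card (\<Union>(fd c ` tri3 t)) = 3"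
      using BD by blast+
    define xs where "xs = filter (mem c) K2l"
    define ys where "ys = filter (\<lambda>t. tri3 t \<subseteq> set xs) LTl"
    have H: "H = set xs" using c(2) by (simp add: Hc_def xs_def)
    have L1: "{l \<in> tri3 ` set LTl. l \<subseteq> set xs} = tri3 ` set ys"
      unfolding ys_def img_filter by simp
    have dys: "distinct ys" "set ys \<subseteq> {(a,b,c). a<b \<and> b<c}"
      using distinct_LTl sorted_LTl by (auto simp: ys_def)
    show "incidence_iso H {l \<in> tri3 ` set LTl. l \<subseteq> H} (\<in>) (G2_points 5) (G2_lines 5) (\<subseteq>)"
      unfolding H L1
    proof (rule G2iso[where f = "fd c"])
      show "finite (set xs)" "finite (tri3 ` set ys)" by auto
      show "inj_on (fd c) (set xs)"
      proof -
        have "inj_on (\<lambda>a. case qd c a of (i,j) \<Rightarrow> {i,j}) (set xs)"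
          by (rule inj_pairs) (use B in \<open>auto simp: xs_def\<close>)
        then show ?thesis by (simp add: fd_def[abs_def])
      qed
      show "\<forall>p\<in>set xs. fd c p \<subseteq> {1..5} \<and> card (fd c p) = 2" using B(2) by (simp add: xs_def)
      show "card (set xs) = 5 choose 2"
        using B(3) distinct_card[of xs] distinct_K2l by (simp add: xs_def ch)
      show "\<forall>l\<in>tri3 ` set ys. l \<subseteq> set xs \<and> card l = 3"
        using card_tri3_3 by (auto simp: ys_def)
      show "\<forall>l\<in>tri3 ` set ys. \<Union>(fd c ` l) \<subseteq> {1..5} \<and> card (\<Union>(fd c ` l)) = 3"
        using B(5) by (simp add: ys_def xs_def)
      show "card (tri3 ` set ys) = 5 choose 3"
        using card_tri3'[OF dys] B(4) by (simp add: ys_def xs_def ch)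
    qed
  qed
qed

theorem mainTheorem3:
  defines "K1 \<equiv> {7, 11, 13, 14, 19, 21, 22, 25, 26, 28} :: nat set"
      and "K2 \<equiv> {3, 5, 6, 9, 10, 12, 15, 17, 18, 20, 23, 24, 27, 29, 30} :: nat set"
      and "K3 \<equiv> {1, 2, 4, 8, 16, 31} :: nat set"
      and "D \<equiv> defective_triples 5"
      and "L \<equiv> {T \<in> defective_triples 5. T \<subseteq> {3, 5, 6, 9, 10, 12, 15, 17, 18, 20, 23, 24, 27, 29, 30}}"
  shows
    \<comment> \<open>(i)\<close>
    "K1 \<union> K2 \<union> K3 = {1..31} \<and> K1 \<inter> K2 = {} \<and> K1 \<inter> K3 = {} \<and> K2 \<inter> K3 = {} \<and>
     (\<forall>a\<in>K1. card {T \<in> D. a \<in> T} = 9) \<and>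
     (\<forall>a\<in>K2. card {T \<in> D. a \<in> T} = 7) \<and>
     (\<forall>a\<in>K3. card {T \<in> D. a \<in> T} = 0) \<and>
    \<comment> \<open>(ii)\<close>
     is_configuration K2 L 15 4 20 3 \<and>
     incidence_iso K2 L (\<in>) (G2_points 6) (G2_lines 6) (\<subseteq>) \<and>
    \<comment> \<open>(iii)\<close>
     (\<exists>\<phi>. bij_betw \<phi> (geom_hyperplanes K2 L) {1..31} \<and>
        bij_betw (\<lambda>V. \<phi> ` V) (veldkamp_lines K2 L) (distinguished_triples 5) \<and>
        \<phi> ` {H \<in> geom_hyperplanes K2 L. card H = 6} = K1 \<and>
        \<phi> ` {H \<in> geom_hyperplanes K2 L. card H = 7} = K2 \<and>
        \<phi> ` {H \<in> geom_hyperplanes K2 L. card H = 10} = K3) \<and>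
     (\<forall>H \<in> geom_hyperplanes K2 L. card H = 6 \<longrightarrow>
        (\<exists>l1\<in>L. \<exists>l2\<in>L. l1 \<inter> l2 = {} \<and> H = l1 \<union> l2)) \<and>
     (\<forall>H \<in> geom_hyperplanes K2 L. card H = 7 \<longrightarrow>
        (\<exists>p\<in>K2. H = insert p {q \<in> K2. q \<noteq> p \<and> \<not> (\<exists>l\<in>L. p \<in> l \<and> q \<in> l)})) \<and>
     (\<forall>H \<in> geom_hyperplanes K2 L. card H = 10 \<longrightarrow>
        incidence_iso H {l \<in> L. l \<subseteq> H} (\<in>) (G2_points 5) (G2_lines 5) (\<subseteq>))"
proof -
  have K2d: "K2 = set K2l" unfolding K2_def by (simp add: K2l_def)
  have Le: "L = tri3 ` set LTl" unfolding L_def by (rule L5)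
  have De: "D = tri3 ` set DTl" unfolding D_def by (rule D5)
  have A1: "K1 \<union> K2 \<union> K3 = {1..31}" unfolding K1_def K2_def K3_def I31 by (simp add: ss)
  have A2: "K1 \<inter> K2 = {}" "K1 \<inter> K3 = {}" "K2 \<inter> K3 = {}" unfolding K1_def K2_def K3_def by simp_all
  have C: "(\<forall>a\<in>K1. card {T \<in> D. a \<in> T} = 9)" "(\<forall>a\<in>K2. card {T \<in> D. a \<in> T} = 7)" "(\<forall>a\<in>K3. card {T \<in> D. a \<in> T} = 0)"
    unfolding K1_def K2_def K3_def De card_tri3[OF distinct_DTl sorted_DTl] using countD by simp_all
  have G: "is_configuration K2 L 15 4 20 3" "incidence_iso K2 L (\<in>) (G2_points 6) (G2_lines 6) (\<subseteq>)"
    unfolding K2d Le using config iso6 by simp_all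
  have P: "\<exists>\<phi>. bij_betw \<phi> (geom_hyperplanes K2 L) {1..31} \<and>
        bij_betw (\<lambda>V. \<phi> ` V) (veldkamp_lines K2 L) (distinguished_triples 5) \<and>
        \<phi> ` {H \<in> geom_hyperplanes K2 L. card H = 6} = K1 \<and>
        \<phi> ` {H \<in> geom_hyperplanes K2 L. card H = 7} = K2 \<and>
        \<phi> ` {H \<in> geom_hyperplanes K2 L. card H = 10} = K3"
  proof (intro exI conjI)
    show "bij_betw phi (geom_hyperplanes K2 L) {1..31}" unfolding K2d Le by (rule bij_phi)
    show "bij_betw (\<lambda>V. phi ` V) (veldkamp_lines K2 L) (distinguished_triples 5)" unfolding K2d Le by (rule bij_VL)
    show "phi ` {H \<in> geom_hyperplanes K2 L. card H = 6} = K1" unfolding K2d Le K1_def by (rule phi_sizes(1))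
    show "phi ` {H \<in> geom_hyperplanes K2 L. card H = 7} = K2" unfolding Le K2d
      using phi_sizes(2) K2set by simp
    show "phi ` {H \<in> geom_hyperplanes K2 L. card H = 10} = K3" unfolding K2d Le K3_def by (rule phi_sizes(3))
  qed
  have S6: "\<forall>H \<in> geom_hyperplanes K2 L. card H = 6 \<longrightarrow>
        (\<exists>l1\<in>L. \<exists>l2\<in>L. l1 \<inter> l2 = {} \<and> H = l1 \<union> l2)" unfolding K2d Le by (rule shape6)
  have S7: "\<forall>H \<in> geom_hyperplanes K2 L. card H = 7 \<longrightarrow>
        (\<exists>p\<in>K2. H = insert p {q \<in> K2. q \<noteq> p \<and> \<not> (\<exists>l\<in>L. p \<in> l \<and> q \<in> l)})" unfolding K2d Le by (rule shape7)
  have S10: "\<forall>H \<in> geom_hyperplanes K2 L. card H = 10 \<longrightarrow>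
        incidence_iso H {l \<in> L. l \<subseteq> H} (\<in>) (G2_points 5) (G2_lines 5) (\<subseteq>)" unfolding K2d Le by (rule shape10)
  show ?thesis using A1 A2 C G P S6 S7 S10 by (intro conjI) assumption+
qed


end
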